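(* For every integer $n\ge 3$ with $n\equiv 2\pmod 4$, $\gamma_t(C_n\times C_4)\le\gamma_p(C_n\times C_4)\le n+2$.
   Context: All graphs are finite, simple and undirected. $C_n$ denotes the cycle of order $n$ and $G\times H$ the Cartesian product of graphs. For a graph $G$ without isolated vertices: a set $D\subseteq V(G)$ is a total dominating set if every vertex of $G$ (including those in $D$) has a neighbour in $D$; $\gamma_t(G)$ is the minimum size of a total dominating set. A set $D\subseteq V(G)$ is a paired dominating set if every vertex outside $D$ has a neighbour in $D$ and the induced subgraph $G[D]$ has a perfect matching; $\gamma_p(G)$ is the minimum size of a paired dominating set. *)

theory Defs
  imports Main
begin

text \<open>A finite simple graph is given by a vertex set V and a symmetric,
irreflexive adjacency relation E (only its restriction to V matters).\<close>

definition cycle_adj :: "nat \<Rightarrow> nat \<Rightarrow> nat \<Rightarrow> bool" where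
  "cycle_adj n i j \<longleftrightarrow> i < n \<and> j < n \<and> (j = (i + 1) mod n \<or> i = (j + 1) mod n)"

definition cycle_verts :: "nat \<Rightarrow> nat set" where
  "cycle_verts n = {..<n}"

definition cart_verts :: "'a set \<Rightarrow> 'b set \<Rightarrow> ('a \<times> 'b) set" where
  "cart_verts V W = V \<times> W"

definition cart_adj ::
  "('a \<Rightarrow> 'a \<Rightarrow> bool) \<Rightarrow> ('b \<Rightarrow> 'b \<Rightarrow> bool) \<Rightarrow> 'a \<times> 'b \<Rightarrow> 'a \<times> 'b \<Rightarrow> bool" where
  "cart_adj E F p q \<longleftrightarrow>
     (fst p = fst q \<and> F (snd p) (snd q)) \<or> (snd p = snd q \<and> E (fst p) (fst q))"

definition total_dominating :: "'a set \<Rightarrow> ('a \<Rightarrow> 'a \<Rightarrow> bool) \<Rightarrow> 'a set \<Rightarrow> bool" where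
  "total_dominating V E D \<longleftrightarrow> D \<subseteq> V \<and> (\<forall>v\<in>V. \<exists>u\<in>D. E v u)"

definition perfect_matching_induced :: "('a \<Rightarrow> 'a \<Rightarrow> bool) \<Rightarrow> 'a set \<Rightarrow> 'a set set \<Rightarrow> bool" where
  "perfect_matching_induced E D M \<longleftrightarrow>
     (\<forall>e\<in>M. \<exists>u v. e = {u, v} \<and> u \<in> D \<and> v \<in> D \<and> u \<noteq> v \<and> E u v) \<and>
     (\<forall>e\<in>M. \<forall>f\<in>M. e \<noteq> f \<longrightarrow> e \<inter> f = {}) \<and>
     \<Union>M = D"

definition paired_dominating :: "'a set \<Rightarrow> ('a \<Rightarrow> 'a \<Rightarrow> bool) \<Rightarrow> 'a set \<Rightarrow> bool" where
  "paired_dominating V E D \<longleftrightarrow> D \<subseteq> V \<and> (\<forall>v\<in>V - D. \<exists>u\<in>D. E v u) \<and>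
     (\<exists>M. perfect_matching_induced E D M)"

definition gamma_t :: "'a set \<Rightarrow> ('a \<Rightarrow> 'a \<Rightarrow> bool) \<Rightarrow> nat" where
  "gamma_t V E = Min {card D | D. total_dominating V E D}"

definition gamma_p :: "'a set \<Rightarrow> ('a \<Rightarrow> 'a \<Rightarrow> bool) \<Rightarrow> nat" where
  "gamma_p V E = Min {card D | D. paired_dominating V E D}"

end

theory Submission
  imports Defs
begin

definition pr :: "nat \<Rightarrow> (nat \<times> nat) set" where
  "pr k = (if k mod 2 = 0 then {(2*k,0),(2*k,1)} else {(2*k,2),(2*k,3)})"

definition MM :: "nat \<Rightarrow> (nat \<times> nat) set set" where
  "MM n = pr ` {..<n div 2} \<union> {{(n-1,2),(n-1,3)}}"

lemma paired_total:
  assumes sym: "\<And>x y. E x y \<Longrightarrow> E y x" and p: "paired_dominating V E D"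
  shows "total_dominating V E D"
proof -
  from p obtain M where sub: "D \<subseteq> V" and dom: "\<forall>v\<in>V - D. \<exists>u\<in>D. E v u"
    and M: "perfect_matching_induced E D M" unfolding paired_dominating_def by blast
  have "\<exists>u\<in>D. E v u" if "v \<in> D" for v
  proof -
    from that M obtain e where e: "e \<in> M" "v \<in> e" unfolding perfect_matching_induced_def by blast
    with M obtain a b where "e = {a,b}" "a \<in> D" "b \<in> D" "E a b"
      unfolding perfect_matching_induced_def by blast
    with e sym show ?thesis by auto
  qed
  with sub dom show ?thesis unfolding total_dominating_def by blast
qed

lemma cart_sym: "cart_adj (cycle_adj n) (cycle_adj m) x y \<Longrightarrow> cart_adj (cycle_adj n) (cycle_adj m) y x"
  unfolding cart_adj_def cycle_adj_def by auto

lemma memD: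
  assumes "even n"
  shows "(i,j) \<in> \<Union>(MM n) \<longleftrightarrow>
    (i < n \<and> ((i mod 4 = 0 \<and> j < 2) \<or> (i mod 4 = 2 \<and> (j = 2 \<or> j = 3)))) \<or> (i = n - 1 \<and> (j = 2 \<or> j = 3))"
proof
  assume "(i,j) \<in> \<Union>(MM n)"
  then show "(i < n \<and> ((i mod 4 = 0 \<and> j < 2) \<or> (i mod 4 = 2 \<and> (j = 2 \<or> j = 3)))) \<or> (i = n - 1 \<and> (j = 2 \<or> j = 3))"
  proof -
    from \<open>(i,j) \<in> \<Union>(MM n)\<close> consider (a) "(i,j) \<in> {(n-1,2),(n-1,3)}" | (b) k where "k < n div 2" "(i,j) \<in> pr k"
      unfolding MM_def by blast
    then show ?thesis
    proof cases
      case a then show ?thesis by auto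
    next
      case (b k)
      have "i < n" using b assms unfolding pr_def by (auto split: if_splits)
      moreover have "(i mod 4 = 0 \<and> j < 2) \<or> (i mod 4 = 2 \<and> (j = 2 \<or> j = 3))"
      proof (cases "k mod 2 = 0")
        case True
        then have "i = 2*k" "j < 2" using b(2) unfolding pr_def by auto
        with True show ?thesis by presburger
      next
        case False
        then have "i = 2*k" "j = 2 \<or> j = 3" using b(2) unfolding pr_def by auto
        with False show ?thesis by presburger
      qed
      ultimately show ?thesis by blast
    qed
  qed
next
  assume h: "(i < n \<and> ((i mod 4 = 0 \<and> j < 2) \<or> (i mod 4 = 2 \<and> (j = 2 \<or> j = 3)))) \<or> (i = n - 1 \<and> (j = 2 \<or> j = 3))"
  show "(i,j) \<in> \<Union>(MM n)"
  proof (cases "i = n - 1 \<and> (j = 2 \<or> j = 3)")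
    case True then show ?thesis unfolding MM_def by auto
  next
    case False
    with h have a: "i < n" "(i mod 4 = 0 \<and> j < 2) \<or> (i mod 4 = 2 \<and> (j = 2 \<or> j = 3))" by auto
    define k where "k = i div 2"
    have i: "i = 2*k" using a(2) unfolding k_def by presburger
    have k: "k < n div 2" using a(1) i assms by presburger
    have "(i,j) \<in> pr k" proof (cases "j < 2")
      case True
      with a(2) have "k mod 2 = 0" using i by presburger
      with True show ?thesis unfolding pr_def i by auto
    next
      case False
      with a(2) have "k mod 2 = 1" "j = 2 \<or> j = 3" using i by presburger+
      then show ?thesis unfolding pr_def i by auto
    qed
    with k show ?thesis unfolding MM_def by blast
  qed
qed

lemma m32: "(i::nat) mod 4 = 3 \<Longrightarrow> (i-1) mod 4 = 2"
proof -
  assume a: "i mod 4 = 3"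
  have "i = 4*(i div 4) + 3" using a div_mult_mod_eq[of i 4] by linarith
  then have "i - 1 = 4*(i div 4) + 2" by linarith
  moreover have "\<And>x q::nat. x = 4*q + 2 \<Longrightarrow> x mod 4 = 2" by presburger
  ultimately show ?thesis by blast
qed

lemma m10: "(i::nat) mod 4 = 1 \<Longrightarrow> (i-1) mod 4 = 0"
proof -
  assume a: "i mod 4 = 1"
  have "i = 4*(i div 4) + 1" using a div_mult_mod_eq[of i 4] by linarith
  then have "i - 1 = 4*(i div 4)" by linarith
  then show ?thesis by simp
qed

lemma adjv: "j < 4 \<Longrightarrow> j' < 4 \<Longrightarrow> i < n \<Longrightarrow> (j' = (j+1) mod 4 \<or> j = (j'+1) mod 4) \<Longrightarrow>
  cart_adj (cycle_adj n) (cycle_adj 4) (i,j) (i,j')"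
  unfolding cart_adj_def cycle_adj_def by auto

lemma adjh1: "i + 1 < n \<Longrightarrow> cart_adj (cycle_adj n) (cycle_adj 4) (i,j) (i+1,j)"
  unfolding cart_adj_def cycle_adj_def by auto

lemma adjh2: "i < n \<Longrightarrow> i \<ge> 1 \<Longrightarrow> cart_adj (cycle_adj n) (cycle_adj 4) (i,j) (i-1,j)"
  unfolding cart_adj_def cycle_adj_def by auto

lemma paired_exists:
  fixes n :: nat
  assumes "n \<ge> 3" and "n mod 4 = 2"
  shows "paired_dominating (cart_verts (cycle_verts n) (cycle_verts 4)) (cart_adj (cycle_adj n) (cycle_adj 4)) (\<Union>(MM n))"
proof -
  let ?V = "cart_verts (cycle_verts n) (cycle_verts 4)"
  let ?E = "cart_adj (cycle_adj n) (cycle_adj 4)"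
  let ?D = "\<Union>(MM n)"
  have ev: "even n" using assms(2) by presburger
  note mem = memD[OF ev]
  have sub: "?D \<subseteq> ?V"
  proof
    fix x assume "x \<in> ?D"
    then obtain i j where x: "x = (i,j)" "(i,j) \<in> ?D" by (cases x) auto
    from x(2) have "i < n \<and> j < 4" unfolding mem using assms(1) by auto
    then show "x \<in> ?V" unfolding x cart_verts_def cycle_verts_def by auto
  qed
  have dom: "\<forall>v\<in>?V - ?D. \<exists>u\<in>?D. ?E v u"
  proof
    fix v assume v: "v \<in> ?V - ?D"
    obtain i j where vij: "v = (i,j)" by (cases v)
    have ij: "i < n" "j < 4" using v unfolding vij cart_verts_def cycle_verts_def by auto
    have nd: "(i,j) \<notin> ?D" using v vij by auto
    have "i mod 4 = 0 \<or> i mod 4 = 1 \<or> i mod 4 = 2 \<or> i mod 4 = 3" by presburger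
    moreover have "j = 0 \<or> j = 1 \<or> j = 2 \<or> j = 3" using ij by auto
    ultimately show "\<exists>u\<in>?D. ?E v u"
    proof (elim disjE)
      assume a: "i mod 4 = 0" "j = 0"
      have "(i,j) \<in> ?D" unfolding mem using a ij by auto
      with nd show ?thesis by blast
    next
      assume a: "i mod 4 = 0" "j = 1"
      have "(i,j) \<in> ?D" unfolding mem using a ij by auto
      with nd show ?thesis by blast
    next
      assume "i mod 4 = 0" "j = 2"
      then have "(i,1) \<in> ?D" "?E v (i,1)" using ij mem vij by (auto intro: adjv)
      then show ?thesis by blast
    next
      assume "i mod 4 = 0" "j = 3"
      then have "(i,0) \<in> ?D" "?E v (i,0)" using ij mem vij by (auto intro: adjv)
      then show ?thesis by blast
    next
      assume a: "i mod 4 = 1" "j = 0"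
      have m: "(i-1) mod 4 = 0" using a(1) by (rule m10)
      have "(i-1,0) \<in> ?D" unfolding mem using m ij a by auto
      moreover have "?E v (i-1,0)" unfolding vij a(2) using a ij by (intro adjh2) auto
      ultimately show ?thesis by blast
    next
      assume a: "i mod 4 = 1" "j = 1"
      have m: "(i-1) mod 4 = 0" using a(1) by (rule m10)
      have "(i-1,1) \<in> ?D" unfolding mem using m ij a by auto
      moreover have "?E v (i-1,1)" unfolding vij a(2) using a ij by (intro adjh2) auto
      ultimately show ?thesis by blast
    next
      assume a: "i mod 4 = 1" "j = 2"
      then have "i \<noteq> n - 1" using nd mem by auto
      then have b: "i + 1 < n" using ij by auto
      then have "(i+1,2) \<in> ?D" proof -
        have mm: "i mod 4 = 1 \<longrightarrow> (i+1) mod 4 = 2" "i mod 4 = 3 \<longrightarrow> (i+1) mod 4 = 0" by presburger+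
        show ?thesis unfolding mem using mm a b by auto
      qed
      moreover have "?E v (i+1,2)" unfolding vij a(2) using b by (rule adjh1)
      ultimately show ?thesis by blast
    next
      assume a: "i mod 4 = 1" "j = 3"
      then have "i \<noteq> n - 1" using nd mem by auto
      then have b: "i + 1 < n" using ij by auto
      then have "(i+1,3) \<in> ?D" proof -
        have mm: "i mod 4 = 1 \<longrightarrow> (i+1) mod 4 = 2" "i mod 4 = 3 \<longrightarrow> (i+1) mod 4 = 0" by presburger+
        show ?thesis unfolding mem using mm a b by auto
      qed
      moreover have "?E v (i+1,3)" unfolding vij a(2) using b by (rule adjh1)
      ultimately show ?thesis by blast
    next
      assume "i mod 4 = 2" "j = 0"
      then have "(i,3) \<in> ?D" "?E v (i,3)" using ij mem vij by (auto intro: adjv)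
      then show ?thesis by blast
    next
      assume "i mod 4 = 2" "j = 1"
      then have "(i,2) \<in> ?D" "?E v (i,2)" using ij mem vij by (auto intro: adjv)
      then show ?thesis by blast
    next
      assume a: "i mod 4 = 2" "j = 2"
      have "(i,j) \<in> ?D" unfolding mem using a ij by auto
      with nd show ?thesis by blast
    next
      assume a: "i mod 4 = 2" "j = 3"
      have "(i,j) \<in> ?D" unfolding mem using a ij by auto
      with nd show ?thesis by blast
    next
      assume a: "i mod 4 = 3" "j = 0"
      have "i \<noteq> n - 1"
      proof
        assume "i = n - 1"
        then have "n = i + 1" using ij by linarith
        then show False using a(1) assms(2) by presburger
      qed
      then have b: "i + 1 < n" using ij by auto
      then have "(i+1,0) \<in> ?D" proof -
        have mm: "i mod 4 = 1 \<longrightarrow> (i+1) mod 4 = 2" "i mod 4 = 3 \<longrightarrow> (i+1) mod 4 = 0" by presburger+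
        show ?thesis unfolding mem using mm a b by auto
      qed
      moreover have "?E v (i+1,0)" unfolding vij a(2) using b by (rule adjh1)
      ultimately show ?thesis by blast
    next
      assume a: "i mod 4 = 3" "j = 1"
      have "i \<noteq> n - 1"
      proof
        assume "i = n - 1"
        then have "n = i + 1" using ij by linarith
        then show False using a(1) assms(2) by presburger
      qed
      then have b: "i + 1 < n" using ij by auto
      then have "(i+1,1) \<in> ?D" proof -
        have mm: "i mod 4 = 1 \<longrightarrow> (i+1) mod 4 = 2" "i mod 4 = 3 \<longrightarrow> (i+1) mod 4 = 0" by presburger+
        show ?thesis unfolding mem using mm a b by auto
      qed
      moreover have "?E v (i+1,1)" unfolding vij a(2) using b by (rule adjh1)
      ultimately show ?thesis by blast
    next
      assume a: "i mod 4 = 3" "j = 2"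
      have m: "(i-1) mod 4 = 2" using a(1) by (rule m32)
      have "(i-1,2) \<in> ?D" unfolding mem using m ij by auto
      moreover have "?E v (i-1,2)" unfolding vij a(2) using a ij by (intro adjh2) auto
      ultimately show ?thesis by blast
    next
      assume a: "i mod 4 = 3" "j = 3"
      have m: "(i-1) mod 4 = 2" using a(1) by (rule m32)
      have "(i-1,3) \<in> ?D" unfolding mem using m ij by auto
      moreover have "?E v (i-1,3)" unfolding vij a(2) using a ij by (intro adjh2) auto
      ultimately show ?thesis by blast
    qed
  qed
  have pm: "perfect_matching_induced ?E ?D (MM n)"
    unfolding perfect_matching_induced_def
  proof (intro conjI ballI impI)
    fix e assume e: "e \<in> MM n"
    then consider (a) "e = {(n-1,2),(n-1,3)}" | (b) k where "k < n div 2" "e = pr k"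
      unfolding MM_def by blast
    then show "\<exists>u v. e = {u, v} \<and> u \<in> ?D \<and> v \<in> ?D \<and> u \<noteq> v \<and> ?E u v"
    proof cases
      case a
      have E: "?E (n-1,2) (n-1,3)" using assms(1) by (intro adjv) auto
      have "(n-1,2) \<in> ?D" "(n-1,3) \<in> ?D" using a e by blast+
      then show ?thesis
      proof (intro exI conjI)
        show "e = {(n-1,2),(n-1,3)}" by (fact a)
      qed (use E in simp_all)
    next
      case (b k)
      have kn: "2*k < n" using b(1) by linarith
      show ?thesis
      proof (cases "k mod 2 = 0")
        case True
        then have e2: "e = {(2*k,0),(2*k,1)}" using b unfolding pr_def by auto
        have E2: "?E (2*k,0) (2*k,1)" using kn by (intro adjv) auto
        have m2: "(2*k,0) \<in> ?D" "(2*k,1) \<in> ?D" using e e2 by blast+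
        show ?thesis
        proof (intro exI conjI)
          show "e = {(2*k,0),(2*k,1)}" by (fact e2)
        qed (use E2 m2 in simp_all)
      next
        case False
        then have e2: "e = {(2*k,2),(2*k,3)}" using b unfolding pr_def by auto
        have E2: "?E (2*k,2) (2*k,3)" using kn by (intro adjv) auto
        have m2: "(2*k,2) \<in> ?D" "(2*k,3) \<in> ?D" using e e2 by blast+
        show ?thesis
        proof (intro exI conjI)
          show "e = {(2*k,2),(2*k,3)}" by (fact e2)
        qed (use E2 m2 in simp_all)
      qed
    qed
  next
    fix e f assume e: "e \<in> MM n" and f: "f \<in> MM n" and ne: "e \<noteq> f"
    have fst_pr: "fst ` pr k = {2*k}" for k unfolding pr_def by auto
    have fst_e: "\<exists>c. fst ` e = {c} \<and> (e = {(n-1,2),(n-1,3)} \<or> (\<exists>k<n div 2. c = 2*k \<and> e = pr k))"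
      if "e \<in> MM n" for e using that fst_pr unfolding MM_def by auto
    obtain c where c: "fst ` e = {c}" "e = {(n-1,2),(n-1,3)} \<or> (\<exists>k<n div 2. c = 2*k \<and> e = pr k)"
      using fst_e[OF e] by blast
    obtain d where d: "fst ` f = {d}" "f = {(n-1,2),(n-1,3)} \<or> (\<exists>k<n div 2. d = 2*k \<and> f = pr k)"
      using fst_e[OF f] by blast
    have "c \<noteq> d"
    proof
      assume cd: "c = d"
      from c(2) d(2) ne show False
      proof (elim disjE exE conjE)
        fix k assume "e = {(n-1,2),(n-1,3)}" "d = 2*k" "f = pr k"
        then have "c = n - 1" using c(1) by auto
        then have "n = 2*k + 1" using cd \<open>d = 2*k\<close> assms(1) by linarith
        then show False using ev by presburger
      next
        fix k assume "f = {(n-1,2),(n-1,3)}" "c = 2*k" "e = pr k"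
        then have "d = n - 1" using d(1) by auto
        then have "n = 2*k + 1" using cd \<open>c = 2*k\<close> assms(1) by linarith
        then show False using ev by presburger
      next
        fix k l assume "c = 2*k" "e = pr k" "d = 2*l" "f = pr l" "e \<noteq> f"
        then show False using cd by auto
      qed auto
    qed
    show "e \<inter> f = {}"
    proof (rule ccontr)
      assume "e \<inter> f \<noteq> {}"
      then obtain x where "x \<in> e" "x \<in> f" by blast
      then have "fst x \<in> fst ` e" "fst x \<in> fst ` f" by auto
      then show False using c(1) d(1) \<open>c \<noteq> d\<close> by auto
    qed
  qed simp
  show ?thesis unfolding paired_dominating_def using sub dom pm by blast
qed

lemma cardD:
  "card (\<Union>(MM n)) \<le> n div 2 * 2 + 2"
proof -
  have cM: "card (MM n) \<le> n div 2 + 1"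
  proof -
    have "card (MM n) \<le> card (pr ` {..<n div 2}) + card {{(n-1,2::nat),(n-1,3::nat)}}"
      unfolding MM_def by (rule card_Un_le)
    also have "card (pr ` {..<n div 2}) \<le> n div 2"
      using card_image_le[of "{..<n div 2}" pr] by simp
    finally show ?thesis by simp
  qed
  have b2: "\<forall>u\<in>MM n. card u \<le> 2"
    by (auto simp: MM_def pr_def card_insert_if)
  have "card (\<Union>(MM n)) \<le> (\<Sum>u\<in>MM n. card u)"
    by (rule card_Union_le_sum_card)
  also have "\<dots> \<le> of_nat (card (MM n)) * 2"
    using sum_bounded_above[of "MM n" card 2] b2 by blast
  also have "\<dots> \<le> (n div 2 + 1) * 2" using cM by simp
  finally show ?thesis by simp
qed

theorem lemma4p2:
  fixes n :: nat
  assumes "n \<ge> 3" and "n mod 4 = 2"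
  shows "gamma_t (cart_verts (cycle_verts n) (cycle_verts 4)) (cart_adj (cycle_adj n) (cycle_adj 4))
           \<le> gamma_p (cart_verts (cycle_verts n) (cycle_verts 4)) (cart_adj (cycle_adj n) (cycle_adj 4))
       \<and> gamma_p (cart_verts (cycle_verts n) (cycle_verts 4)) (cart_adj (cycle_adj n) (cycle_adj 4))
           \<le> n + 2"
proof -
  let ?V = "cart_verts (cycle_verts n) (cycle_verts 4)"
  let ?E = "cart_adj (cycle_adj n) (cycle_adj 4)"
  have pd: "paired_dominating ?V ?E (\<Union>(MM n))" using paired_exists assms .
  have finV: "finite ?V" unfolding cart_verts_def cycle_verts_def by auto
  have finT: "finite {card D | D. total_dominating ?V ?E D}"
  proof (rule finite_subset[of _ "card ` Pow ?V"])
    show "{card D | D. total_dominating ?V ?E D} \<subseteq> card ` Pow ?V"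
      unfolding total_dominating_def by auto
  qed (use finV in auto)
  have finP: "finite {card D | D. paired_dominating ?V ?E D}"
  proof (rule finite_subset[of _ "card ` Pow ?V"])
    show "{card D | D. paired_dominating ?V ?E D} \<subseteq> card ` Pow ?V"
      unfolding paired_dominating_def by auto
  qed (use finV in auto)
  have subs: "{card D | D. paired_dominating ?V ?E D} \<subseteq> {card D | D. total_dominating ?V ?E D}"
    using paired_total[of ?E, OF cart_sym] by blast
  have ne: "{card D | D. paired_dominating ?V ?E D} \<noteq> {}" using pd by blast
  have 1: "gamma_t ?V ?E \<le> gamma_p ?V ?E"
    unfolding gamma_t_def gamma_p_def by (rule Min_antimono[OF subs ne finT])
  have "gamma_p ?V ?E \<le> card (\<Union>(MM n))"
    unfolding gamma_p_def using finP pd by (auto intro: Min_le)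
  also have "\<dots> \<le> n div 2 * 2 + 2" by (rule cardD)
  also have "\<dots> = n + 2" using assms(2) by presburger
  finally show ?thesis using 1 by simp
qed

end
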